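(* Let $X,Y$ be a section-pair with $m$ chords, and suppose that each vertex of $X$ is incident to at most one chord. Then either there is a family of $m/2$ pairwise-interlacing chords, or there are pairs of distinct chords $(e_i,e'_i)$, $e_i=(x_i,y_i)$, $e'_i=(x'_i,y'_i)$ (with $x_i,x'_i\in X$, $y_i,y'_i\in Y$), $i=1,\dots,t$, such that: (1) for every $1\le i\le t$, $e_i,e'_i$ are either parallel or share their vertex in $Y$ (i.e. $y_i=y'_i$); (2) for every $1\le i<j\le t$, both $e_i$ and $e'_i$ interlace both $e_j$ and $e'_j$; (3) $\sum_{i=1}^t d_X(x_i,x'_i)\ge m/4$.
   Context: A section-pair in a graph $G$ is a pair $X,Y$ of vertex-disjoint paths; the two endpoints of $X$ are designated its top $x^{t}$ and bottom $x^{b}$, and those of $Y$ its top $y^t$ and bottom $y^b$. For distinct $x_1,x_2\in X$, $x_1$ is above $x_2$ if $x_1$ is closer to $x^t$ along $X$ than $x_2$, otherwise below; similarly in $Y$. A chord is an edge of $G$ with one endpoint in $X$ and one in $Y$. For $x_1,x_2\in X$, $d_X(x_1,x_2)$ is the number of edges of the subpath of $X$ between $x_1$ and $x_2$. Two chords $(x_1,y_1),(x_2,y_2)$ ($x_i\in X,y_i\in Y$) with no common vertex are parallel if for some $i\in\{1,2\}$, $x_i$ is above $x_{3-i}$ and $y_i$ is above $y_{3-i}$; otherwise they are interlacing. *)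

theory Defs
  imports Main
begin

definition simple_graph :: "('a \<Rightarrow> 'a \<Rightarrow> bool) \<Rightarrow> bool" where
  "simple_graph E \<longleftrightarrow> (\<forall>u v. E u v \<longrightarrow> E v u) \<and> (\<forall>v. \<not> E v v)"

(* A path is a nonempty list of distinct vertices, consecutive ones adjacent;
   its first element is the top, its last element the bottom. *)
definition is_path :: "('a \<Rightarrow> 'a \<Rightarrow> bool) \<Rightarrow> 'a list \<Rightarrow> bool" where
  "is_path E P \<longleftrightarrow> P \<noteq> [] \<and> distinct P \<and> (\<forall>i. Suc i < length P \<longrightarrow> E (P ! i) (P ! Suc i))"

definition section_pair :: "('a \<Rightarrow> 'a \<Rightarrow> bool) \<Rightarrow> 'a list \<Rightarrow> 'a list \<Rightarrow> bool" where
  "section_pair E X Y \<longleftrightarrow> is_path E X \<and> is_path E Y \<and> set X \<inter> set Y = {}"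

definition pos :: "'a list \<Rightarrow> 'a \<Rightarrow> nat" where
  "pos P v = (THE i. i < length P \<and> P ! i = v)"

definition above :: "'a list \<Rightarrow> 'a \<Rightarrow> 'a \<Rightarrow> bool" where
  "above P a b \<longleftrightarrow> a \<in> set P \<and> b \<in> set P \<and> pos P a < pos P b"

definition dpath :: "'a list \<Rightarrow> 'a \<Rightarrow> 'a \<Rightarrow> nat" where
  "dpath P a b = nat \<bar>int (pos P a) - int (pos P b)\<bar>"

definition chords :: "('a \<Rightarrow> 'a \<Rightarrow> bool) \<Rightarrow> 'a list \<Rightarrow> 'a list \<Rightarrow> ('a \<times> 'a) set" where
  "chords E X Y = {(x, y). x \<in> set X \<and> y \<in> set Y \<and> E x y}"

definition no_common_vertex :: "'a \<times> 'a \<Rightarrow> 'a \<times> 'a \<Rightarrow> bool" where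
  "no_common_vertex e f \<longleftrightarrow> fst e \<noteq> fst f \<and> snd e \<noteq> snd f"

definition parallel :: "'a list \<Rightarrow> 'a list \<Rightarrow> 'a \<times> 'a \<Rightarrow> 'a \<times> 'a \<Rightarrow> bool" where
  "parallel X Y e f \<longleftrightarrow> no_common_vertex e f \<and>
     ((above X (fst e) (fst f) \<and> above Y (snd e) (snd f)) \<or>
      (above X (fst f) (fst e) \<and> above Y (snd f) (snd e)))"

definition interlacing :: "'a list \<Rightarrow> 'a list \<Rightarrow> 'a \<times> 'a \<Rightarrow> 'a \<times> 'a \<Rightarrow> bool" where
  "interlacing X Y e f \<longleftrightarrow> no_common_vertex e f \<and> \<not> parallel X Y e f"

end

theory Submission
  imports Defs
begin


lemma pos_in:
  assumes "x \<in> set P" "distinct P"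
  shows "pos P x < length P \<and> P ! pos P x = x"
proof -
  obtain i where i: "i < length P" "P ! i = x" using assms(1) by (auto simp: in_set_conv_nth)
  have "pos P x = i" unfolding pos_def
    by (rule the_equality) (use i assms(2) nth_eq_iff_index_eq in auto)
  with i show ?thesis by simp
qed

lemma pos_inj:
  assumes "x \<in> set P" "y \<in> set P" "distinct P" "pos P x = pos P y"
  shows "x = y"
  using pos_in[OF assms(1,3)] pos_in[OF assms(2,3)] assms(4) by metis

lemma inter1:
  "fst e \<in> set X \<Longrightarrow> fst f \<in> set X \<Longrightarrow> snd e \<in> set Y \<Longrightarrow> snd f \<in> set Y \<Longrightarrow>
   pos X (fst e) < pos X (fst f) \<Longrightarrow> pos Y (snd f) < pos Y (snd e) \<Longrightarrow> interlacing X Y e f"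
  by (auto simp: interlacing_def parallel_def no_common_vertex_def above_def)

lemma inter2:
  "fst e \<in> set X \<Longrightarrow> fst f \<in> set X \<Longrightarrow> snd e \<in> set Y \<Longrightarrow> snd f \<in> set Y \<Longrightarrow>
   pos X (fst f) < pos X (fst e) \<Longrightarrow> pos Y (snd e) < pos Y (snd f) \<Longrightarrow> interlacing X Y e f"
  by (auto simp: interlacing_def parallel_def no_common_vertex_def above_def)

lemma par1:
  "fst e \<in> set X \<Longrightarrow> fst f \<in> set X \<Longrightarrow> snd e \<in> set Y \<Longrightarrow> snd f \<in> set Y \<Longrightarrow>
   pos X (fst e) < pos X (fst f) \<Longrightarrow> pos Y (snd e) < pos Y (snd f) \<Longrightarrow> parallel X Y e f"
  by (auto simp: parallel_def no_common_vertex_def above_def)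

definition fam :: "'a list \<Rightarrow> 'a list \<Rightarrow> ('a \<times> 'a) set \<Rightarrow> nat \<Rightarrow> (nat \<Rightarrow> 'a \<times> 'a) \<Rightarrow> (nat \<Rightarrow> 'a \<times> 'a) \<Rightarrow> bool" where
  "fam X Y C t e e' \<longleftrightarrow>
     (\<forall>i \<in> {1..t}. e i \<in> C \<and> e' i \<in> C \<and> e i \<noteq> e' i) \<and>
     (\<forall>i \<in> {1..t}. parallel X Y (e i) (e' i) \<or> snd (e i) = snd (e' i)) \<and>
     (\<forall>i \<in> {1..t}. \<forall>j \<in> {1..t}. i < j \<longrightarrow>
          interlacing X Y (e i) (e j) \<and> interlacing X Y (e i) (e' j) \<and>
          interlacing X Y (e' i) (e j) \<and> interlacing X Y (e' i) (e' j))"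

lemma fam_mono: "fam X Y P t e e' \<Longrightarrow> P \<subseteq> C \<Longrightarrow> fam X Y C t e e'"
  unfolding fam_def by blast

lemma fam_empty: "fam X Y C 0 e e'"
  unfolding fam_def by auto

lemma fam_extend:
  assumes "fam X Y P t e e'" "P \<subseteq> C" "u \<in> C" "c \<in> C" "u \<noteq> c"
    "parallel X Y u c \<or> snd u = snd c"
    "\<forall>g\<in>P. interlacing X Y g u \<and> interlacing X Y g c"
  shows "fam X Y C (Suc t) (e(Suc t := u)) (e'(Suc t := c))"
proof -
  have A: "\<forall>i \<in> {1..t}. e i \<in> P \<and> e' i \<in> P" using assms(1) unfolding fam_def by blast
  have B: "i \<in> {1..Suc t} \<Longrightarrow> i \<in> {1..t} \<or> i = Suc t" for i by auto
  have 1: "\<forall>i \<in> {1..Suc t}. (e(Suc t := u)) i \<in> C \<and> (e'(Suc t := c)) i \<in> C \<and> (e(Suc t := u)) i \<noteq> (e'(Suc t := c)) i"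
  proof
    fix i assume "i \<in> {1..Suc t}"
    then consider "i \<in> {1..t}" | "i = Suc t" using B by blast
    then show "(e(Suc t := u)) i \<in> C \<and> (e'(Suc t := c)) i \<in> C \<and> (e(Suc t := u)) i \<noteq> (e'(Suc t := c)) i"
      using assms A unfolding fam_def by cases auto
  qed
  have 2: "\<forall>i \<in> {1..Suc t}. parallel X Y ((e(Suc t := u)) i) ((e'(Suc t := c)) i) \<or> snd ((e(Suc t := u)) i) = snd ((e'(Suc t := c)) i)"
  proof
    fix i assume "i \<in> {1..Suc t}"
    then consider "i \<in> {1..t}" | "i = Suc t" using B by blast
    then show "parallel X Y ((e(Suc t := u)) i) ((e'(Suc t := c)) i) \<or> snd ((e(Suc t := u)) i) = snd ((e'(Suc t := c)) i)"
      using assms A unfolding fam_def by cases auto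
  qed
  have 3: "\<forall>i \<in> {1..Suc t}. \<forall>j \<in> {1..Suc t}. i < j \<longrightarrow>
          interlacing X Y ((e(Suc t := u)) i) ((e(Suc t := u)) j) \<and> interlacing X Y ((e(Suc t := u)) i) ((e'(Suc t := c)) j) \<and>
          interlacing X Y ((e'(Suc t := c)) i) ((e(Suc t := u)) j) \<and> interlacing X Y ((e'(Suc t := c)) i) ((e'(Suc t := c)) j)"
  proof (intro ballI impI)
    fix i j assume i: "i \<in> {1..Suc t}" and j: "j \<in> {1..Suc t}" and ij: "i < j"
    then have it: "i \<in> {1..t}" by auto
    from j consider "j \<in> {1..t}" | "j = Suc t" using B by blast
    then show "interlacing X Y ((e(Suc t := u)) i) ((e(Suc t := u)) j) \<and> interlacing X Y ((e(Suc t := u)) i) ((e'(Suc t := c)) j) \<and>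
          interlacing X Y ((e'(Suc t := c)) i) ((e(Suc t := u)) j) \<and> interlacing X Y ((e'(Suc t := c)) i) ((e'(Suc t := c)) j)"
    proof cases
      case 1 then show ?thesis using it ij assms(1) unfolding fam_def by auto
    next
      case 2 then show ?thesis using it A assms(7) by auto
    qed
  qed
  show ?thesis using 1 2 3 unfolding fam_def by blast
qed

lemma main:
  assumes sp: "section_pair E X Y" and inj: "inj_on (\<lambda>d. pos X (fst d)) (chords E X Y)"
  shows "finite C \<Longrightarrow> C \<subseteq> chords E X Y \<Longrightarrow> \<exists>F t e e'. F \<subseteq> C \<and>
     (\<forall>a\<in>F. \<forall>b\<in>F. a \<noteq> b \<longrightarrow> interlacing X Y a b) \<and> fam X Y C t e e' \<and>
     card F + (\<Sum>i=1..t. dpath X (fst (e i)) (fst (e' i))) \<ge> card C"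
proof (induction "card C" arbitrary: C rule: less_induct)
  case less
  have dY: "distinct Y" using sp unfolding section_pair_def is_path_def by blast
  define px where "px d = pos X (fst d)" for d :: "'a \<times> 'a"
  define py where "py d = pos Y (snd d)" for d :: "'a \<times> 'a"
  have chC: "\<And>d. d \<in> C \<Longrightarrow> fst d \<in> set X \<and> snd d \<in> set Y"
    using less.prems(2) unfolding chords_def by auto
  have injC: "inj_on px C" using inj less.prems(2) unfolding px_def by (rule inj_on_subset)
  show ?case
  proof (cases "C = {}")
    case True
    show ?thesis
      by (rule exI[of _ "{}"], rule exI[of _ 0], rule exI[of _ undefined], rule exI[of _ undefined])
         (simp add: True fam_empty)
  next
    case False
    have "Max (px ` C) \<in> px ` C" using False less.prems(1) by simp
    then obtain c where cC: "c \<in> C" and cmax0: "px c = Max (px ` C)" by auto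
    have cmax: "\<forall>d\<in>C. px d \<le> px c" using cmax0 less.prems(1) by simp
    have ltc: "\<And>d. d \<in> C \<Longrightarrow> d \<noteq> c \<Longrightarrow> px d < px c"
    proof -
      fix d assume d: "d \<in> C" "d \<noteq> c"
      have "px d \<noteq> px c" using inj_on_eq_iff[OF injC d(1) cC] d(2) by simp
      moreover have "px d \<le> px c" using cmax d(1) by blast
      ultimately show "px d < px c" by simp
    qed
    show ?thesis
    proof (cases "\<forall>d\<in>C-{c}. py c < py d")
      case True
      define C' where "C' = C - {c}"
      have cardC: "card C = Suc (card C')" unfolding C'_def using cC less.prems(1)
        using card_Suc_Diff1[OF less.prems(1) cC] by simp
      obtain F t e e' where F: "F \<subseteq> C'" "\<forall>a\<in>F. \<forall>b\<in>F. a \<noteq> b \<longrightarrow> interlacing X Y a b"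
        "fam X Y C' t e e'" "card F + (\<Sum>i=1..t. dpath X (fst (e i)) (fst (e' i))) \<ge> card C'"
      proof -
        have "card C' < card C" using cardC by simp
        moreover have "finite C'" "C' \<subseteq> chords E X Y" using less.prems unfolding C'_def by auto
        ultimately show ?thesis using less.hyps[of C'] that by blast
      qed
      have cF: "c \<notin> F" using F(1) unfolding C'_def by auto
      have finF: "finite F" using F(1) less.prems(1) unfolding C'_def by (meson finite_Diff finite_subset)
      have I: "\<forall>a\<in>insert c F. \<forall>b\<in>insert c F. a \<noteq> b \<longrightarrow> interlacing X Y a b"
      proof (intro ballI impI)
        fix a b assume a: "a \<in> insert c F" and b: "b \<in> insert c F" and ab: "a \<noteq> b"
        show "interlacing X Y a b"
        proof (cases "a = c")
          case True
          then have bC: "b \<in> C" "b \<noteq> c" using b ab F(1) unfolding C'_def by auto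
          have "py c < py b" using \<open>\<forall>d\<in>C-{c}. py c < py d\<close> bC by blast
          then show ?thesis using \<open>a = c\<close> inter2[where e=a and f=b and X=X and Y=Y] chC[OF bC(1)] chC[OF cC] ltc[OF bC]
            unfolding px_def py_def by auto
        next
          case False
          show ?thesis
          proof (cases "b = c")
            case True
            then have aC: "a \<in> C" "a \<noteq> c" using a ab F(1) unfolding C'_def by auto
            have "py c < py a" using \<open>\<forall>d\<in>C-{c}. py c < py d\<close> aC by blast
            then show ?thesis using \<open>b = c\<close> inter1[where e=a and f=b and X=X and Y=Y] chC[OF aC(1)] chC[OF cC] ltc[OF aC]
              unfolding px_def py_def by auto
          next
            case False
            then show ?thesis using \<open>a \<noteq> c\<close> a b ab F(2) by auto
          qed
        qed
      qed
      show ?thesis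
      proof (intro exI conjI)
        show "insert c F \<subseteq> C" using F(1) cC unfolding C'_def by blast
        show "\<forall>a\<in>insert c F. \<forall>b\<in>insert c F. a \<noteq> b \<longrightarrow> interlacing X Y a b" using I .
        show "fam X Y C t e e'" using fam_mono[OF F(3)] unfolding C'_def by blast
        have "card (insert c F) = Suc (card F)" using finF cF by simp
        then show "card C \<le> card (insert c F) + (\<Sum>i=1..t. dpath X (fst (e i)) (fst (e' i)))"
          using F(4) cardC by linarith
      qed
    next
      case False
      define S where "S = {d\<in>C-{c}. py d \<le> py c}"
      have Sne: "S \<noteq> {}" using False unfolding S_def by (auto simp: not_less)
      have finS: "finite S" using less.prems(1) unfolding S_def by auto
      have "Min (px ` S) \<in> px ` S" using Sne finS by simp
      then obtain u where uS: "u \<in> S" and umin0: "px u = Min (px ` S)" by auto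
      have umin: "\<forall>d\<in>S. px u \<le> px d" using umin0 finS by simp
      have uC: "u \<in> C" "u \<noteq> c" "py u \<le> py c" using uS unfolding S_def by auto
      have uc: "px u < px c" using ltc uC by blast
      define P where "P = {d\<in>C. px d < px u}"
      have PC: "P \<subseteq> C" unfolding P_def by auto
      have finP: "finite P" using PC less.prems(1) finite_subset by blast
      have cardP: "card P < card C" using PC uC less.prems(1) unfolding P_def
        by (intro psubset_card_mono) auto
      obtain F t e e' where F: "F \<subseteq> P" "\<forall>a\<in>F. \<forall>b\<in>F. a \<noteq> b \<longrightarrow> interlacing X Y a b"
        "fam X Y P t e e'" "card F + (\<Sum>i=1..t. dpath X (fst (e i)) (fst (e' i))) \<ge> card P"
      proof -
        have "finite P" "P \<subseteq> chords E X Y" using finP PC less.prems(2) by auto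
        then show ?thesis using less.hyps[of P] cardP that by blast
      qed
      have Pg: "\<And>g. g \<in> P \<Longrightarrow> px g < px u \<and> py c < py g"
      proof -
        fix g assume g: "g \<in> P"
        then have "px g < px u" "g \<in> C" unfolding P_def by auto
        moreover have "g \<noteq> c" using \<open>px g < px u\<close> uc by auto
        ultimately have "\<not> py g \<le> py c"
        proof (intro notI)
          assume "px g < px u" "g \<in> C" "g \<noteq> c" "py g \<le> py c"
          then have "g \<in> S" unfolding S_def by blast
          then have "px u \<le> px g" using umin by blast
          then show False using \<open>px g < px u\<close> by simp
        qed
        then show "px g < px u \<and> py c < py g" using \<open>px g < px u\<close> by simp
      qed
      have gint: "\<And>g. g \<in> P \<Longrightarrow> interlacing X Y g u \<and> interlacing X Y g c"
      proof -
        fix g assume g: "g \<in> P"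
        then have "g \<in> C" using PC by auto
        then show "interlacing X Y g u \<and> interlacing X Y g c"
          using inter1[where e=g and f=u and X=X and Y=Y] inter1[where e=g and f=c and X=X and Y=Y] chC[of g] chC[OF uC(1)] chC[OF cC]
            Pg[OF g] uc uC(3) unfolding px_def py_def by auto
      qed
      have pc: "parallel X Y u c \<or> snd u = snd c"
      proof (cases "py u = py c")
        case True
        then show ?thesis using pos_inj[of "snd u" Y "snd c"] chC[OF uC(1)] chC[OF cC] dY
          unfolding py_def by auto
      next
        case False
        then show ?thesis using par1[where e=u and f=c and X=X and Y=Y] chC[OF uC(1)] chC[OF cC] uc uC(3)
          unfolding px_def py_def by auto
      qed
      have fam2: "fam X Y C (Suc t) (e(Suc t := u)) (e'(Suc t := c))"
        by (rule fam_extend[OF F(3) PC uC(1) cC uC(2) pc]) (use gint in blast)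
      have uF: "u \<notin> F" using F(1) unfolding P_def by auto
      have finF: "finite F" using F(1) finP finite_subset by blast
      have I: "\<forall>a\<in>insert u F. \<forall>b\<in>insert u F. a \<noteq> b \<longrightarrow> interlacing X Y a b"
      proof (intro ballI impI)
        fix a b assume a: "a \<in> insert u F" and b: "b \<in> insert u F" and ab: "a \<noteq> b"
        show "interlacing X Y a b"
        proof (cases "a = u")
          case True
          then have bP: "b \<in> P" using b ab F(1) by auto
          then have "b \<in> C" using PC by auto
          then show ?thesis using True inter2[where e=a and f=b and X=X and Y=Y] chC[of b] chC[OF uC(1)] Pg[OF bP] uC(3)
            unfolding px_def py_def by auto
        next
          case False
          show ?thesis
          proof (cases "b = u")
            case True
            then show ?thesis using gint[of a] a ab F(1) by blast
          next
            case False
            then show ?thesis using \<open>a \<noteq> u\<close> a b ab F(2) by auto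
          qed
        qed
      qed
      have sumeq: "(\<Sum>i=1..Suc t. dpath X (fst ((e(Suc t := u)) i)) (fst ((e'(Suc t := c)) i)))
          = (\<Sum>i=1..t. dpath X (fst (e i)) (fst (e' i))) + dpath X (fst u) (fst c)"
        by (simp add: sum.cl_ivl_Suc)
      have dp: "dpath X (fst u) (fst c) = px c - px u"
        using uc unfolding dpath_def px_def by auto
      define Q where "Q = {d\<in>C. px u \<le> px d}"
      have CPQ: "C = P \<union> Q" unfolding P_def Q_def by auto
      have "card Q \<le> card {px u..px c}"
      proof (rule card_inj_on_le[of px])
        show "inj_on px Q" using injC unfolding Q_def by (rule inj_on_subset) auto
        show "px ` Q \<subseteq> {px u..px c}" using cmax unfolding Q_def by auto
      qed auto
      then have cQ: "card Q \<le> px c - px u + 1" by simp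
      have "card C \<le> card P + card Q" using card_Un_le[of P Q] CPQ by simp
      show ?thesis
      proof (intro exI conjI)
        show "insert u F \<subseteq> C" using F(1) uC(1) PC by blast
        show "\<forall>a\<in>insert u F. \<forall>b\<in>insert u F. a \<noteq> b \<longrightarrow> interlacing X Y a b" using I .
        show "fam X Y C (Suc t) (e(Suc t := u)) (e'(Suc t := c))" using fam2 .
        have "card (insert u F) = Suc (card F)" using finF uF by simp
        then show "card C \<le> card (insert u F) + (\<Sum>i=1..Suc t. dpath X (fst ((e(Suc t := u)) i)) (fst ((e'(Suc t := c)) i)))"
          using F(4) sumeq dp cQ \<open>card C \<le> card P + card Q\<close> uc by linarith
      qed
    qed
  qed
qed


theorem lemma4p3:
  fixes E :: "'a \<Rightarrow> 'a \<Rightarrow> bool" and X Y :: "'a list" and m :: nat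
  assumes "simple_graph E"
    and "section_pair E X Y"
    and "m = card (chords E X Y)"
    and "\<forall>x \<in> set X. card {e \<in> chords E X Y. fst e = x} \<le> 1"
  shows "(\<exists>F \<subseteq> chords E X Y. 2 * card F \<ge> m \<and>
            (\<forall>e \<in> F. \<forall>f \<in> F. e \<noteq> f \<longrightarrow> interlacing X Y e f))
       \<or> (\<exists>(t::nat) (e :: nat \<Rightarrow> 'a \<times> 'a) (e' :: nat \<Rightarrow> 'a \<times> 'a).
            (\<forall>i \<in> {1..t}. e i \<in> chords E X Y \<and> e' i \<in> chords E X Y \<and> e i \<noteq> e' i) \<and>
            (\<forall>i \<in> {1..t}. parallel X Y (e i) (e' i) \<or> snd (e i) = snd (e' i)) \<and>
            (\<forall>i \<in> {1..t}. \<forall>j \<in> {1..t}. i < j \<longrightarrow>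
                interlacing X Y (e i) (e j) \<and> interlacing X Y (e i) (e' j) \<and>
                interlacing X Y (e' i) (e j) \<and> interlacing X Y (e' i) (e' j)) \<and>
            4 * (\<Sum>i = 1..t. dpath X (fst (e i)) (fst (e' i))) \<ge> m)"
proof -
  have dX: "distinct X" using assms(2) unfolding section_pair_def is_path_def by blast
  have finch: "finite (chords E X Y)"
  proof (rule finite_subset)
    show "chords E X Y \<subseteq> set X \<times> set Y" unfolding chords_def by auto
  qed auto
  have inj: "inj_on (\<lambda>d. pos X (fst d)) (chords E X Y)"
  proof (rule inj_onI)
    fix d1 d2 assume d1: "d1 \<in> chords E X Y" and d2: "d2 \<in> chords E X Y"
      and eq: "pos X (fst d1) = pos X (fst d2)"
    have x1: "fst d1 \<in> set X" and x2: "fst d2 \<in> set X" using d1 d2 unfolding chords_def by auto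
    have "fst d1 = fst d2" using pos_inj[OF x1 x2 dX eq] .
    then have in1: "d1 \<in> {e \<in> chords E X Y. fst e = fst d1}" and in2: "d2 \<in> {e \<in> chords E X Y. fst e = fst d1}"
      using d1 d2 by auto
    have "card {e \<in> chords E X Y. fst e = fst d1} \<le> 1" using assms(4) x1 by blast
    moreover have "finite {e \<in> chords E X Y. fst e = fst d1}" using finch by auto
    ultimately have "\<forall>a\<in>{e \<in> chords E X Y. fst e = fst d1}. \<forall>b\<in>{e \<in> chords E X Y. fst e = fst d1}. a = b"
      using card_le_Suc0_iff_eq[of "{e \<in> chords E X Y. fst e = fst d1}"] by simp
    then show "d1 = d2" using in1 in2 by blast
  qed
  obtain F t e e' where F: "F \<subseteq> chords E X Y" "\<forall>a\<in>F. \<forall>b\<in>F. a \<noteq> b \<longrightarrow> interlacing X Y a b"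
     "fam X Y (chords E X Y) t e e'"
     "card F + (\<Sum>i=1..t. dpath X (fst (e i)) (fst (e' i))) \<ge> card (chords E X Y)"
    using main[OF assms(2) inj finch subset_refl] by (elim exE conjE)
  show ?thesis
  proof (cases "2 * card F \<ge> m")
    case True
    then show ?thesis using F(1,2) by (intro disjI1 exI[of _ F]) simp
  next
    case False
    then have "4 * (\<Sum>i=1..t. dpath X (fst (e i)) (fst (e' i))) \<ge> m" using F(4) assms(3) by linarith
    with F(3) have G: "fam X Y (chords E X Y) t e e' \<and> 4 * (\<Sum>i=1..t. dpath X (fst (e i)) (fst (e' i))) \<ge> m" by simp
    show ?thesis
      apply (rule disjI2)
      apply (rule exI[of _ t], rule exI[of _ e], rule exI[of _ e'])
      using G unfolding fam_def conj_assoc by assumption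
  qed
qed

end
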